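(* Let $p,q>0$ with $p+q=2k\le n$, $\epsilon,\eta\in\{0,1\}$, and let $\tau$ be special with associated integers $u,v$ and $i'_r,j'_s$. Let $x_1>\dots>x_q$ and $y_1>\dots>y_p$ be integers in $[u+v+1,n]$ with $x_i\ne y_j$ for all $i,j$, such that \[ x_i+u+q+1-i\equiv \eta\pmod 2\ (1\le i\le q),\qquad y_{p+1-m}+v+m-1\equiv\epsilon\pmod 2\ (1\le m\le p). \] Then there is exactly one tuple $(w\tau,\sigma,a,b)$ arising from a solution $(w,\sigma,a,b)$ of equation (E) such that the first $q$ coordinates of $\sigma\rho_{\mathfrak g}$ are $x_1,\dots,x_q$ and the last $p$ coordinates are $-y_p,\dots,-y_1$.
   Context: Setting: $n\ge1$, $\mathfrak g=\mathfrak{sp}(2n,\mathbb C)$, $\mathfrak k=\mathfrak{gl}(n,\mathbb C)$, compact Cartan and its dual identified with $\mathbb C^n$; positive compact roots $e_i-e_j$ ($i<j$), positive noncompact roots $e_i+e_j$ ($i<j$), $2e_i$; $\rho_{\mathfrak g}=(n,\dots,1)$, $\rho_{\mathfrak k}=(\frac{n-1}{2},\dots,-\frac{n-1}{2})$; $W$ = all signed permutations of coordinates, $W_{\mathfrak k}=S_n$; $W^1=\{\sigma\in W:\sigma\rho_{\mathfrak g}\text{ satisfies }(\sigma\rho_{\mathfrak g})_1\ge\dots\ge(\sigma\rho_{\mathfrak g})_n\}$. Let $k\ge1$, $\Lambda_k=(n-k,\dots,1,0,-1,\dots,-k+1)$. Special weights: for integers $u,v\ge0$ with $u+v=n-2k$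 and $i_1>\dots>i_u$, $j_1>\dots>j_v$ with $\{i_1,\dots,i_u\}\sqcup\{j_1,\dots,j_v\}=\{k+1,\dots,n-k\}$, put $i'_r=i_r-k$, $j'_s=j_s-k$ and let $\tau=x\Lambda_k-\rho_{\mathfrak k}$ where $x\Lambda_k=(i_1,\dots,i_u,k,k-1,\dots,-k+1,-j_v,\dots,-j_1)$; such $\tau$ are called special, with associated integers $u,v$. Equation (E): for special $\tau$, a solution of (E) is a tuple $(w,\sigma,a,b)$ with $w\in W_{\mathfrak k}$, $\sigma\in W^1$, integers $a_1\ge\dots\ge a_p\ge0$, $b_1\ge\dots\ge b_q\ge0$, such that, with $\alpha_i=\epsilon+2a_i$, $\beta_j=\eta+2b_j$, \[ w\tau+\rho_{\mathfrak k}+(\tfrac{q-p}{2},\dots,\tfrac{q-p}{2})=\sigma\rho_{\mathfrak g}+(-\beta_1,\dots,-\beta_q,0,\dots,0,\alpha_p,\dots,\alpha_1), \] the middle block having $n-p-q$ zeros. *)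

theory Defs
  imports Complex_Main "HOL-Combinatorics.Permutations" "HOL-Number_Theory.Cong"
begin

text \<open>Vectors in C^n are represented as lists of length n (coordinates 1..n are list
positions 0..n-1); all vectors occurring here have rational entries.\<close>

definition vadd :: "rat list \<Rightarrow> rat list \<Rightarrow> rat list" where
  "vadd xs ys = map2 (+) xs ys"

definition vsub :: "rat list \<Rightarrow> rat list \<Rightarrow> rat list" where
  "vsub xs ys = map2 (-) xs ys"

definition rho_g :: "nat \<Rightarrow> rat list" where
  "rho_g n = map (\<lambda>i. of_nat (n - i)) [0..<n]"

definition rho_k :: "nat \<Rightarrow> rat list" where
  "rho_k n = map (\<lambda>i. (of_nat n - 1) / 2 - of_nat i) [0..<n]"

text \<open>Signed permutations (the Weyl group W of type C_n): bijections sigma of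
{-n..-1} union {1..n} with sigma(-x) = -sigma(x), identity elsewhere.
sigma corresponds to the linear map e_i |-> e_(sigma i), where e_(-i) = -e_i.\<close>
definition signed_perm :: "nat \<Rightarrow> (int \<Rightarrow> int) \<Rightarrow> bool" where
  "signed_perm n \<sigma> \<longleftrightarrow> \<sigma> permutes ({- int n..-1} \<union> {1..int n}) \<and> (\<forall>x. \<sigma> (- x) = - \<sigma> x)"

definition sp_act :: "nat \<Rightarrow> (int \<Rightarrow> int) \<Rightarrow> rat list \<Rightarrow> rat list" where
  "sp_act n \<sigma> v = map (\<lambda>j. let i = inv \<sigma> (int j) in of_int (sgn i) * v ! (nat \<bar>i\<bar> - 1)) [1..<n+1]"

definition W1 :: "nat \<Rightarrow> (int \<Rightarrow> int) \<Rightarrow> bool" where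
  "W1 n \<sigma> \<longleftrightarrow> signed_perm n \<sigma> \<and> sorted_wrt (\<ge>) (sp_act n \<sigma> (rho_g n))"

definition xLambda :: "nat \<Rightarrow> int list \<Rightarrow> int list \<Rightarrow> rat list" where
  "xLambda k I J = map of_int (I @ rev [1 - int k..int k] @ map uminus (rev J))"

text \<open>Data (u,v,I,J) defining a special weight, I = [i_1>...>i_u], J = [j_1>...>j_v].\<close>
definition special_data :: "nat \<Rightarrow> nat \<Rightarrow> nat \<Rightarrow> nat \<Rightarrow> int list \<Rightarrow> int list \<Rightarrow> bool" where
  "special_data n k u v I J \<longleftrightarrow> u + v = n - 2 * k \<and> length I = u \<and> length J = v \<and>
     sorted_wrt (>) I \<and> sorted_wrt (>) J \<and> set I \<inter> set J = {} \<and>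
     set I \<union> set J = {int k + 1..int n - int k}"

definition tau_of :: "nat \<Rightarrow> nat \<Rightarrow> int list \<Rightarrow> int list \<Rightarrow> rat list" where
  "tau_of n k I J = vsub (xLambda k I J) (rho_k n)"

text \<open>Action of w in W_k = S_n on a vector (permutation of coordinates).\<close>
definition perm_act :: "(nat \<Rightarrow> nat) \<Rightarrow> rat list \<Rightarrow> rat list" where
  "perm_act w v = permute_list (inv w) v"

definition corr :: "nat \<Rightarrow> nat \<Rightarrow> nat \<Rightarrow> nat \<Rightarrow> nat list \<Rightarrow> nat list \<Rightarrow> rat list" where
  "corr n \<epsilon> \<eta> pq a b =
     map (\<lambda>bj. - (of_nat \<eta> + 2 * of_nat bj)) b @ replicate (n - pq) 0 @
     rev (map (\<lambda>ai. of_nat \<epsilon> + 2 * of_nat ai) a)"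

definition solE :: "nat \<Rightarrow> nat \<Rightarrow> nat \<Rightarrow> nat \<Rightarrow> nat \<Rightarrow> rat list \<Rightarrow>
    (nat \<Rightarrow> nat) \<Rightarrow> (int \<Rightarrow> int) \<Rightarrow> nat list \<Rightarrow> nat list \<Rightarrow> bool" where
  "solE n p q \<epsilon> \<eta> \<tau> w \<sigma> a b \<longleftrightarrow>
     w permutes {..<n} \<and> W1 n \<sigma> \<and>
     length a = p \<and> sorted_wrt (\<ge>) a \<and> length b = q \<and> sorted_wrt (\<ge>) b \<and>
     vadd (vadd (perm_act w \<tau>) (rho_k n)) (replicate n ((of_nat q - of_nat p) / 2))
       = vadd (sp_act n \<sigma> (rho_g n)) (corr n \<epsilon> \<eta> (p + q) a b)"

end

theory Submission imports Defs begin

abbreviation SS :: "nat \<Rightarrow> int set" where "SS n \<equiv> {- int n..-1} \<union> {1..int n}"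

lemma sp_inv_odd:
  assumes "signed_perm n \<sigma>"
  shows "inv \<sigma> permutes SS n" "inv \<sigma> (- x) = - inv \<sigma> x"
proof -
  have P: "\<sigma> permutes SS n" and O: "\<And>x. \<sigma> (- x) = - \<sigma> x" using assms by (auto simp: signed_perm_def)
  show "inv \<sigma> permutes SS n" using permutes_inv[OF P] .
  have "\<sigma> (- inv \<sigma> x) = - x" using O permutes_inverses(1)[OF P] by metis
  then show "inv \<sigma> (- x) = - inv \<sigma> x" using permutes_inverses(2)[OF P] by metis
qed

definition srI :: "nat \<Rightarrow> (int \<Rightarrow> int) \<Rightarrow> int list" where
  "srI n \<sigma> = map (\<lambda>j. sgn (inv \<sigma> (int j + 1)) * (int n + 1 - \<bar>inv \<sigma> (int j + 1)\<bar>)) [0..<n]"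

lemma inv_in:
  assumes "signed_perm n \<sigma>" "j < n"
  shows "1 \<le> \<bar>inv \<sigma> (int j + 1)\<bar> \<and> \<bar>inv \<sigma> (int j + 1)\<bar> \<le> int n"
proof -
  have "int j + 1 \<in> SS n" using assms(2) by auto
  then have "inv \<sigma> (int j + 1) \<in> SS n" using permutes_in_image[OF sp_inv_odd(1)[OF assms(1)]] by blast
  then show ?thesis by auto
qed

lemma sp_act_srI:
  assumes "signed_perm n \<sigma>"
  shows "sp_act n \<sigma> (rho_g n) = map of_int (srI n \<sigma>)"
proof (rule nth_equalityI)
  show "length (sp_act n \<sigma> (rho_g n)) = length (map of_int (srI n \<sigma>))"
    by (simp add: sp_act_def srI_def del: upt_Suc)
  fix j assume "j < length (sp_act n \<sigma> (rho_g n))"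
  then have j: "j < n" by (simp add: sp_act_def del: upt_Suc)
  define i where "i = inv \<sigma> (int j + 1)"
  have b: "1 \<le> \<bar>i\<bar>" "\<bar>i\<bar> \<le> int n" using inv_in[OF assms j] i_def by auto
  have "rho_g n ! (nat \<bar>i\<bar> - 1) = of_int (int n + 1 - \<bar>i\<bar>)"
    using b by (simp add: rho_g_def of_nat_diff)
  moreover have "[1..<n+1] ! j = Suc j" using j by (simp add: nth_upt del: upt_Suc)
  moreover have "inv \<sigma> (1 + int j) = i" by (simp add: i_def add.commute)
  ultimately show "sp_act n \<sigma> (rho_g n) ! j = map of_int (srI n \<sigma>) ! j"
    using j unfolding sp_act_def srI_def i_def[symmetric]
    by (simp add: i_def[symmetric] Let_def of_int_mult del: upt_Suc)
qed

lemma srI_len[simp]: "length (srI n \<sigma>) = n" by (simp add: srI_def)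

lemma srI_nth: "j < n \<Longrightarrow> srI n \<sigma> ! j = sgn (inv \<sigma> (int j + 1)) * (int n + 1 - \<bar>inv \<sigma> (int j + 1)\<bar>)"
  by (simp add: srI_def)

lemma srI_abs:
  assumes "signed_perm n \<sigma>" "j < n"
  shows "\<bar>srI n \<sigma> ! j\<bar> = int n + 1 - \<bar>inv \<sigma> (int j + 1)\<bar>" "1 \<le> \<bar>srI n \<sigma> ! j\<bar>" "\<bar>srI n \<sigma> ! j\<bar> \<le> int n"
proof -
  have b: "1 \<le> \<bar>inv \<sigma> (int j + 1)\<bar>" "\<bar>inv \<sigma> (int j + 1)\<bar> \<le> int n" using inv_in[OF assms] by auto
  then have "sgn (inv \<sigma> (int j + 1)) \<noteq> 0" by (auto simp: sgn_0_0)
  then have "\<bar>sgn (inv \<sigma> (int j + 1))\<bar> = 1" using b by (auto simp: sgn_if)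
  then show "\<bar>srI n \<sigma> ! j\<bar> = int n + 1 - \<bar>inv \<sigma> (int j + 1)\<bar>"
    using b by (simp add: srI_nth[OF assms(2)] abs_mult)
  then show "1 \<le> \<bar>srI n \<sigma> ! j\<bar>" "\<bar>srI n \<sigma> ! j\<bar> \<le> int n" using b by auto
qed

lemma srI_distinct:
  assumes "signed_perm n \<sigma>"
  shows "distinct (map abs (srI n \<sigma>))"
proof (subst distinct_conv_nth, intro allI impI)
  fix i j assume ij: "i < length (map abs (srI n \<sigma>))" "j < length (map abs (srI n \<sigma>))" "i \<noteq> j"
  then have i: "i < n" and j: "j < n" by auto
  show "map abs (srI n \<sigma>) ! i \<noteq> map abs (srI n \<sigma>) ! j"
  proof
    assume "map abs (srI n \<sigma>) ! i = map abs (srI n \<sigma>) ! j"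
    then have e0: "\<bar>srI n \<sigma> ! i\<bar> = \<bar>srI n \<sigma> ! j\<bar>" using i j by simp
    have "\<bar>inv \<sigma> (int i + 1)\<bar> = \<bar>inv \<sigma> (int j + 1)\<bar>"
      using srI_abs(1)[OF assms i] srI_abs(1)[OF assms j] e0 by linarith
    then have "inv \<sigma> (int i + 1) = inv \<sigma> (int j + 1) \<or> inv \<sigma> (int i + 1) = - inv \<sigma> (int j + 1)"
      using abs_eq_iff by blast
    moreover have "inv \<sigma> (- (int j + 1)) = - inv \<sigma> (int j + 1)" by (rule sp_inv_odd(2)[OF assms])
    ultimately have "inv \<sigma> (int i + 1) = inv \<sigma> (int j + 1) \<or> inv \<sigma> (int i + 1) = inv \<sigma> (- (int j + 1))"
      by argo
    moreover have "inj (inv \<sigma>)" using permutes_inj[OF sp_inv_odd(1)[OF assms]] .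
    ultimately have "int i + 1 = int j + 1 \<or> int i + 1 = - (int j + 1)" by (meson injD)
    then show False using ij(3) by auto
  qed
qed

lemma srI_inj:
  assumes "signed_perm n \<sigma>1" "signed_perm n \<sigma>2" "srI n \<sigma>1 = srI n \<sigma>2"
  shows "\<sigma>1 = \<sigma>2"
proof -
  have key: "inv \<sigma> x = sgn (srI n \<sigma> ! (nat x - 1)) * (int n + 1 - \<bar>srI n \<sigma> ! (nat x - 1)\<bar>)"
    if s: "signed_perm n \<sigma>" and x: "1 \<le> x" "x \<le> int n" for \<sigma> x
  proof -
    define j where "j = nat x - 1"
    have j: "j < n" and xj: "x = int j + 1" using x by (auto simp: j_def)
    have b: "1 \<le> \<bar>inv \<sigma> (int j + 1)\<bar>" "\<bar>inv \<sigma> (int j + 1)\<bar> \<le> int n" using inv_in[OF s j] by auto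
    have "sgn (srI n \<sigma> ! j) = sgn (inv \<sigma> (int j + 1))"
      using b by (simp add: srI_nth[OF j] sgn_mult)
    moreover have "\<bar>srI n \<sigma> ! j\<bar> = int n + 1 - \<bar>inv \<sigma> (int j + 1)\<bar>" using srI_abs(1)[OF s j] .
    ultimately have e: "inv \<sigma> (int j + 1) = sgn (srI n \<sigma> ! j) * (int n + 1 - \<bar>srI n \<sigma> ! j\<bar>)"
      by (simp add: sgn_mult_abs)
    show ?thesis using e unfolding j_def[symmetric] xj[symmetric] .
  qed
  have P1: "inv \<sigma>1 permutes SS n" and P2: "inv \<sigma>2 permutes SS n" using sp_inv_odd assms by auto
  have pos: "inv \<sigma>1 x = inv \<sigma>2 x" if "1 \<le> x" "x \<le> int n" for x
    using key[OF assms(1) that] key[OF assms(2) that] assms(3) by simp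
  have "inv \<sigma>1 x = inv \<sigma>2 x" for x
  proof (cases "x \<in> SS n")
    case True
    then show ?thesis
    proof (cases "x > 0")
      case True with \<open>x \<in> SS n\<close> show ?thesis using pos by auto
    next
      case False
      with \<open>x \<in> SS n\<close> have "1 \<le> - x" "- x \<le> int n" by auto
      then have "inv \<sigma>1 (- x) = inv \<sigma>2 (- x)" using pos by blast
      moreover have "inv \<sigma>1 x = - inv \<sigma>1 (- x)" by (simp add: sp_inv_odd(2)[OF assms(1)])
      moreover have "inv \<sigma>2 x = - inv \<sigma>2 (- x)" by (simp add: sp_inv_odd(2)[OF assms(2)])
      ultimately show ?thesis by simp
    qed
  next
    case False
    then show ?thesis using permutes_not_in[OF P1] permutes_not_in[OF P2] by simp
  qed
  then have "inv \<sigma>1 = inv \<sigma>2" by auto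
  moreover have "\<sigma>1 = inv (inv \<sigma>1)" using permutes_inv_inv[of \<sigma>1 "SS n", symmetric] assms(1) unfolding signed_perm_def by blast
  moreover have "\<sigma>2 = inv (inv \<sigma>2)" using permutes_inv_inv[of \<sigma>2 "SS n", symmetric] assms(2) unfolding signed_perm_def by blast
  ultimately show ?thesis by simp
qed

lemma nat_m1_inj: "1 \<le> (X::int) \<Longrightarrow> 1 \<le> Y \<Longrightarrow> nat X - 1 = nat Y - 1 \<Longrightarrow> X = Y" by arith

lemma srI_exists:
  assumes len: "length r = n" and dis: "distinct (map abs r)" and rng: "\<forall>x\<in>set r. 1 \<le> \<bar>x\<bar> \<and> \<bar>x\<bar> \<le> int n"
  shows "\<exists>\<sigma>. signed_perm n \<sigma> \<and> srI n \<sigma> = r"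
proof -
  define h where "h x = sgn (r ! (nat x - 1)) * (int n + 1 - \<bar>r ! (nat x - 1)\<bar>)" for x
  define g where "g x = (if x \<in> SS n then sgn x * h \<bar>x\<bar> else x)" for x
  have hprop: "sgn (h x) = sgn (r ! (nat x - 1)) \<and> \<bar>h x\<bar> = int n + 1 - \<bar>r ! (nat x - 1)\<bar> \<and>
      1 \<le> \<bar>h x\<bar> \<and> \<bar>h x\<bar> \<le> int n \<and> h x \<noteq> 0" if "1 \<le> x" "x \<le> int n" for x
  proof -
    have "nat x - 1 < n" using that by auto
    then have e: "1 \<le> \<bar>r ! (nat x - 1)\<bar>" "\<bar>r ! (nat x - 1)\<bar> \<le> int n" using rng len by auto
    then have s: "\<bar>sgn (r ! (nat x - 1))\<bar> = 1" by (auto simp: sgn_if)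
    show ?thesis using e s unfolding h_def by (auto simp: sgn_mult abs_mult sgn_0_0)
  qed
  have gS: "g x \<in> SS n" if "x \<in> SS n" for x
  proof -
    have ax: "1 \<le> \<bar>x\<bar>" "\<bar>x\<bar> \<le> int n" using that by auto
    then have sx: "\<bar>sgn x\<bar> = 1" by (auto simp: sgn_if)
    have "\<bar>g x\<bar> = \<bar>h \<bar>x\<bar>\<bar>" using that sx by (simp add: g_def abs_mult)
    then have "1 \<le> \<bar>g x\<bar> \<and> \<bar>g x\<bar> \<le> int n" using hprop[OF ax] by simp
    then show ?thesis by auto
  qed
  have ginj: "inj_on g (SS n)"
  proof (rule inj_onI)
    fix x y assume x: "x \<in> SS n" and y: "y \<in> SS n" and e: "g x = g y"
    have ax: "1 \<le> \<bar>x\<bar>" "\<bar>x\<bar> \<le> int n" and ay: "1 \<le> \<bar>y\<bar>" "\<bar>y\<bar> \<le> int n" using x y by auto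
    have sx: "\<bar>sgn x\<bar> = 1" and sy: "\<bar>sgn y\<bar> = 1" using ax ay by (auto simp: sgn_if)
    have gx: "\<bar>g x\<bar> = \<bar>h \<bar>x\<bar>\<bar>" using x sx by (simp add: g_def abs_mult)
    have gy: "\<bar>g y\<bar> = \<bar>h \<bar>y\<bar>\<bar>" using y sy by (simp add: g_def abs_mult)
    have hx: "\<bar>h \<bar>x\<bar>\<bar> = int n + 1 - \<bar>r ! (nat \<bar>x\<bar> - 1)\<bar>" using hprop[OF ax] by blast
    have hy: "\<bar>h \<bar>y\<bar>\<bar> = int n + 1 - \<bar>r ! (nat \<bar>y\<bar> - 1)\<bar>" using hprop[OF ay] by blast
    have "\<bar>h \<bar>x\<bar>\<bar> = \<bar>h \<bar>y\<bar>\<bar>" using e gx gy by metis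
    then have "int n + 1 - \<bar>r ! (nat \<bar>x\<bar> - 1)\<bar> = int n + 1 - \<bar>r ! (nat \<bar>y\<bar> - 1)\<bar>"
      unfolding hx hy .
    then have "\<bar>r ! (nat \<bar>x\<bar> - 1)\<bar> = \<bar>r ! (nat \<bar>y\<bar> - 1)\<bar>" by simp
    moreover have ix: "nat \<bar>x\<bar> - 1 < length r" and iy: "nat \<bar>y\<bar> - 1 < length r" using ax ay len by auto
    ultimately have "map abs r ! (nat \<bar>x\<bar> - 1) = map abs r ! (nat \<bar>y\<bar> - 1)" by (simp only: nth_map[OF ix] nth_map[OF iy])
    then have "nat \<bar>x\<bar> - 1 = nat \<bar>y\<bar> - 1" using nth_eq_iff_index_eq[OF dis] ax ay len by simp
    then have a: "\<bar>x\<bar> = \<bar>y\<bar>" using ax ay nat_m1_inj by blast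
    then have "sgn x * h \<bar>x\<bar> = sgn y * h \<bar>x\<bar>" using e x y by (simp add: g_def)
    then have "sgn x = sgn y" using hprop[OF ax] by simp
    then show "x = y" using a by (metis sgn_mult_abs)
  qed
  have gim: "g ` SS n = SS n" by (rule endo_inj_surj) (use gS ginj in blast)+
  have gb: "bij_betw g (SS n) (SS n)" using ginj gim by (simp add: bij_betw_def)
  have gP: "g permutes SS n"
    by (rule bij_imp_permutes[OF gb]) (unfold g_def, erule if_not_P)
  have godd: "g (- x) = - g x" for x
    by (cases "x \<in> SS n") (auto simp: g_def sgn_minus)
  define \<sigma> where "\<sigma> = inv g"
  have sP: "\<sigma> permutes SS n" unfolding \<sigma>_def by (rule permutes_inv[OF gP])
  have isg: "inv \<sigma> = g" unfolding \<sigma>_def by (rule permutes_inv_inv[OF gP])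
  have sodd: "\<sigma> (- x) = - \<sigma> x" for x
  proof -
    have "g (- \<sigma> x) = - x" using godd permutes_inverses(1)[OF gP] unfolding \<sigma>_def by metis
    then have "\<sigma> (g (- \<sigma> x)) = - \<sigma> x" unfolding \<sigma>_def using permutes_inverses(2)[OF gP] by metis
    then show ?thesis using \<open>g (- \<sigma> x) = - x\<close> by simp
  qed
  have sg: "signed_perm n \<sigma>" using sP sodd by (simp add: signed_perm_def)
  have "srI n \<sigma> = r"
  proof (rule nth_equalityI)
    show "length (srI n \<sigma>) = length r" using len by simp
    fix j assume "j < length (srI n \<sigma>)"
    then have j: "j < n" by simp
    have jS: "int j + 1 \<in> SS n" using j by auto
    have a1: "1 \<le> int j + 1" "int j + 1 \<le> int n" using j by auto
    have "inv \<sigma> (int j + 1) = h (int j + 1)" using jS by (simp add: isg g_def)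
    moreover have nj: "nat (int j + 1) - 1 = j" by arith
    ultimately have "sgn (inv \<sigma> (int j + 1)) = sgn (r ! j)" "\<bar>inv \<sigma> (int j + 1)\<bar> = int n + 1 - \<bar>r ! j\<bar>"
      using hprop[OF a1] unfolding nj by auto
    then show "srI n \<sigma> ! j = r ! j" using j by (simp add: srI_nth sgn_mult_abs)
  qed
  then show ?thesis using sg by blast
qed

lemma vadd_nth: "i < length xs \<Longrightarrow> i < length ys \<Longrightarrow> vadd xs ys ! i = xs ! i + ys ! i"
  by (simp add: vadd_def)
lemma vadd_len[simp]: "length (vadd xs ys) = min (length xs) (length ys)"
  by (simp add: vadd_def)
lemma rho_k_len[simp]: "length (rho_k n) = n" by (simp add: rho_k_def)
lemma rho_k_nth: "i < n \<Longrightarrow> rho_k n ! i = (of_nat n - 1) / 2 - of_nat i" by (simp add: rho_k_def)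

lemma corr_len: "length a = p \<Longrightarrow> length b = q \<Longrightarrow> p + q \<le> n \<Longrightarrow> length (corr n \<epsilon> \<eta> (p+q) a b) = n"
  by (simp add: corr_def)

lemma corr_nth:
  assumes "length a = p" "length b = q" "p + q \<le> n" "i < n"
  shows "corr n \<epsilon> \<eta> (p+q) a b ! i =
    (if i < q then - (of_nat \<eta> + 2 * of_nat (b ! i))
     else if i < n - p then 0 else of_nat \<epsilon> + 2 * of_nat (a ! (n - 1 - i)))"
proof -
  have r: "rev (map (\<lambda>ai. of_nat \<epsilon> + 2 * of_nat ai) a) ! t = (of_nat \<epsilon> + 2 * of_nat (a ! (p - 1 - t)) :: rat)" if "t < p" for t
    using that assms(1) by (simp add: rev_nth)
  show ?thesis
    using assms r[of "i - (n - p)"] unfolding corr_def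
    by (auto simp: nth_append)
qed

lemma eqn_iff:
  fixes L :: "rat list" and r :: "int list" and C :: "rat list"
  assumes "length L = n" "length r = n" "length C = n"
  shows "vadd (vadd L (rho_k n)) (replicate n c) = vadd (map of_int r) C
     \<longleftrightarrow> (\<forall>i<n. L ! i = of_int (r ! i) + C ! i - rho_k n ! i - c)"
proof -
  have "vadd (vadd L (rho_k n)) (replicate n c) = vadd (map of_int r) C \<longleftrightarrow>
      (\<forall>i<n. vadd (vadd L (rho_k n)) (replicate n c) ! i = vadd (map of_int r) C ! i)"
    using assms by (auto simp: list_eq_iff_nth_eq)
  also have "\<dots> \<longleftrightarrow> (\<forall>i<n. L ! i + rho_k n ! i + c = of_int (r ! i) + C ! i)"
    using assms by (simp add: vadd_nth)
  also have "\<dots> \<longleftrightarrow> (\<forall>i<n. L ! i = of_int (r ! i) + C ! i - rho_k n ! i - c)"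
    by (auto simp: algebra_simps)
  finally show ?thesis .
qed

lemma dec_gap:
  fixes l :: "int list"
  assumes "sorted_wrt (>) l" "i \<le> j" "j < length l"
  shows "l ! j + int (j - i) \<le> l ! i"
  using assms(2,3)
proof (induction j)
  case 0 then show ?case by simp
next
  case (Suc j)
  show ?case
  proof (cases "i = Suc j")
    case True then show ?thesis by simp
  next
    case False
    then have "i \<le> j" using Suc by simp
    then have "l ! j + int (j - i) \<le> l ! i" using Suc by simp
    moreover have "l ! Suc j < l ! j" using assms(1) Suc.prems by (simp add: sorted_wrt_iff_nth_less)
    ultimately show ?thesis using \<open>i \<le> j\<close> by (simp add: Suc_diff_le)
  qed
qed

lemma sorted_gt_distinct: "sorted_wrt (>) (l::int list) \<Longrightarrow> distinct l"
  by (induction l) auto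

lemma desc_eq:
  fixes l1 l2 :: "int list"
  assumes "sorted_wrt (\<ge>) l1" "sorted_wrt (\<ge>) l2" "mset l1 = mset l2"
  shows "l1 = l2"
proof -
  have s1: "sorted (rev l1)" and s2: "sorted (rev l2)" using assms(1,2) by (simp_all add: sorted_wrt_rev)
  have "sort (rev l2) = rev l1" by (rule properties_for_sort) (use assms(3) s1 in simp_all)
  moreover have "sort (rev l2) = rev l2" using s2 by (simp add: sorted_sort_id)
  ultimately show ?thesis by simp
qed

lemma strict_desc_set_eq:
  fixes l1 l2 :: "int list"
  assumes "sorted_wrt (>) l1" "sorted_wrt (>) l2" "set l1 = set l2"
  shows "l1 = l2"
proof -
  have "sorted_wrt (<) (rev l1)" "sorted_wrt (<) (rev l2)" using assms(1,2) by (simp_all add: sorted_wrt_rev)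
  then have "sorted (rev l1)" "distinct (rev l1)" "sorted (rev l2)" "distinct (rev l2)" by (simp_all add: strict_sorted_iff)
  then have "rev l1 = rev l2" using sorted_distinct_set_unique assms(3) by (metis set_rev)
  then show ?thesis by simp
qed

lemma mset_of_int_inj:
  assumes "mset (map (of_int :: int \<Rightarrow> rat) X) = mset (map of_int Y)"
  shows "mset X = mset Y"
proof -
  have "mset (map floor (map (of_int :: int \<Rightarrow> rat) X)) = mset (map floor (map (of_int :: int \<Rightarrow> rat) Y))"
    using assms by (simp only: mset_map)
  then show ?thesis by (simp add: o_def)
qed

lemma map_of_int_inj: "map (of_int :: int \<Rightarrow> rat) X = map of_int Y \<Longrightarrow> X = Y"
  by (simp add: inj_map_eq_map inj_def)

lemma ge_distinct_gt: "sorted_wrt (\<ge>) (l::int list) \<Longrightarrow> distinct l \<Longrightarrow> sorted_wrt (>) l"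
  by (induction l) (auto simp: order_less_le)

lemma half_nat: "(X::int) mod 2 = 0 \<Longrightarrow> - 1 \<le> X \<Longrightarrow> 2 * int (nat (X div 2)) = X"
proof -
  assume a: "X mod 2 = 0" "- 1 \<le> X"
  have e: "X div 2 * 2 = X" using div_mult_mod_eq[of X 2] a(1) by simp
  then have "0 \<le> X div 2" using a(2) by linarith
  then show ?thesis using e by simp
qed

locale MT =
  fixes n k p q u v \<epsilon> \<eta> :: nat and I J xs ys :: "int list"
  assumes k1: "k \<ge> 1" and p0: "p > 0" and q0: "q > 0" and pq: "p + q = 2 * k" and kn: "2 * k \<le> n"
    and eps: "\<epsilon> \<in> {0, 1}" and eta: "\<eta> \<in> {0, 1}"
    and sd: "special_data n k u v I J"
    and lxs: "length xs = q" and sxs: "sorted_wrt (>) xs"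
    and lys: "length ys = p" and sys: "sorted_wrt (>) ys"
    and rxs: "\<forall>x\<in>set xs. int (u + v + 1) \<le> x \<and> x \<le> int n"
    and rys: "\<forall>y\<in>set ys. int (u + v + 1) \<le> y \<and> y \<le> int n"
    and dxy: "\<forall>x\<in>set xs. \<forall>y\<in>set ys. x \<noteq> y"
    and parx: "\<forall>i\<in>{1..q}. [xs ! (i - 1) + int u + int q + 1 - int i = int \<eta>] (mod 2)"
    and pary: "\<forall>m\<in>{1..p}. [ys ! (p - m) + int v + int m - 1 = int \<epsilon>] (mod 2)"
begin

lemma nN: "n = u + v + 2 * k" using sd kn by (simp add: special_data_def)
lemma lI: "length I = u" and lJ: "length J = v" and sI: "sorted_wrt (>) I" and sJ: "sorted_wrt (>) J"
  and IJd: "set I \<inter> set J = {}" and IJu: "set I \<union> set J = {int k + 1..int n - int k}"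
  using sd by (auto simp: special_data_def)

lemma XYset: "set xs \<union> set ys = {int (u+v) + 1..int n}"
proof -
  have "card (set xs) = q" using sorted_gt_distinct[OF sxs] lxs by (simp add: distinct_card)
  moreover have "card (set ys) = p" using sorted_gt_distinct[OF sys] lys by (simp add: distinct_card)
  moreover have "set xs \<inter> set ys = {}" using dxy by auto
  ultimately have c: "card (set xs \<union> set ys) = 2 * k" using pq by (simp add: card_Un_disjoint)
  have sub: "set xs \<union> set ys \<subseteq> {int (u+v) + 1..int n}" using rxs rys by auto
  have "card {int (u+v) + 1..int n} = 2 * k" using nN by simp
  then show ?thesis using card_subset_eq[OF _ sub] c by simp
qed

lemma xs_lb: "i < q \<Longrightarrow> int (u + v + q) - int i \<le> xs ! i"
proof -
  assume i: "i < q"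
  have "xs ! (q - 1) + int (q - 1 - i) \<le> xs ! i" using dec_gap[OF sxs, of i "q - 1"] i lxs by simp
  moreover have "xs ! (q - 1) \<in> set xs" using lxs q0 by simp
  ultimately show ?thesis using rxs i by force
qed

lemma ys_lb: "j < p \<Longrightarrow> int (u + v + p) - int j \<le> ys ! j"
proof -
  assume j: "j < p"
  have "ys ! (p - 1) + int (p - 1 - j) \<le> ys ! j" using dec_gap[OF sys, of j "p - 1"] j lys by simp
  moreover have "ys ! (p - 1) \<in> set ys" using lys p0 by simp
  ultimately show ?thesis using rys j by force
qed

lemma I_lb: "r < u \<Longrightarrow> int k + int u - int r \<le> I ! r"
proof -
  assume r: "r < u"
  have "I ! (u - 1) + int (u - 1 - r) \<le> I ! r" using dec_gap[OF sI, of r "u - 1"] r lI by simp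
  moreover have "I ! (u - 1) \<in> set I" using lI r by simp
  ultimately show ?thesis using IJu r by force
qed

lemma J_lb: "s < v \<Longrightarrow> int k + int s + 1 \<le> J ! (v - 1 - s)"
proof -
  assume s: "s < v"
  have "J ! (v - 1) + int (v - 1 - (v - 1 - s)) \<le> J ! (v - 1 - s)" using dec_gap[OF sJ, of "v - 1 - s" "v - 1"] s lJ by simp
  moreover have "J ! (v - 1) \<in> set J" using lJ s by simp
  ultimately show ?thesis using IJu s by force
qed

definition XL where "XL = I @ rev [1 - int k..int k] @ map uminus (rev J)"
definition TV where "TV = map (\<lambda>j. XL ! j + int j - int k) [0..<n]"
definition TA where "TA = map (\<lambda>r. I ! r - int k + int r) [0..<u]"
definition TC where "TC = map (\<lambda>s. int u + int s + int k - J ! (v - 1 - s)) [0..<v]"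

lemma len_upto_k: "length [1 - int k..int k] = 2 * k" by simp
lemma nat2k: "nat (2 * int k) = 2 * k" by simp

lemma XL_len: "length XL = n" using nN lI lJ by (simp add: XL_def)

lemma XL_nth: "j < n \<Longrightarrow> XL ! j = (if j < u then I ! j else if j < u + 2 * k then int k - int (j - u)
   else - J ! (v - 1 - (j - u - 2 * k)))"
proof -
  assume j: "j < n"
  have r: "rev [1 - int k..int k] ! t = int k - int t" if "t < 2 * k" for t
  proof -
    have "rev [1 - int k..int k] ! t = [1 - int k..int k] ! (2 * k - 1 - t)" using that by (simp add: rev_nth)
    also have "\<dots> = 1 - int k + int (2 * k - 1 - t)" using that by (subst nth_upto) auto
    finally show ?thesis using that by simp
  qed
  have rj: "rev J ! s = J ! (v - 1 - s)" if "s < v" for s using that lJ by (simp add: rev_nth)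
  show ?thesis
  proof (cases "j < u")
    case True then show ?thesis using lI by (simp add: XL_def nth_append)
  next
    case False
    show ?thesis
    proof (cases "j < u + 2 * k")
      case True
      then have "j - u < 2 * k" using False by linarith
      then show ?thesis using True False lI r[of "j - u"] by (simp add: XL_def nth_append nat2k)
    next
      case False2: False
      have "j - u - 2 * k < v" using j nN False2 by simp
      moreover have "\<not> j - u < 2 * k" using False2 by linarith
      ultimately show ?thesis using False False2 lI lJ rj[of "j - u - 2 * k"] by (simp add: XL_def nth_append nat2k)
    qed
  qed
qed

lemma TV_len: "length TV = n" by (simp add: TV_def)

lemma TV_split: "TV = TA @ replicate (2 * k) (int u) @ TC"
proof (rule nth_equalityI)
  show "length TV = length (TA @ replicate (2 * k) (int u) @ TC)" by (simp only: TV_len) (simp add: TA_def TC_def nN)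
  fix j assume "j < length TV"
  then have j: "j < n" by (simp add: TV_def)
  show "TV ! j = (TA @ replicate (2 * k) (int u) @ TC) ! j"
  proof (cases "j < u")
    case True then show ?thesis using j by (simp add: TV_def TA_def nth_append XL_nth)
  next
    case False
    show ?thesis
    proof (cases "j < u + 2 * k")
      case True
      then have "j - u < 2 * k" using False by linarith
      then show ?thesis using True False j by (simp add: TV_def TA_def nth_append XL_nth)
    next
      case False2: False
      have "j - u - 2 * k < v" using j nN False2 by simp
      moreover have "\<not> j - u < 2 * k" using False2 by linarith
      ultimately show ?thesis using False False2 j by (simp add: TV_def TA_def TC_def nth_append XL_nth)
    qed
  qed
qed

definition FF :: "rat \<Rightarrow> rat" where "FF x = x + ((of_nat n - 1) / 2 - of_nat k)"

lemma tauF: "map FF (tau_of n k I J) = map of_int TV"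
proof (rule nth_equalityI)
  show "length (map FF (tau_of n k I J)) = length (map of_int TV)"
    using XL_len by (simp add: tau_of_def vsub_def xLambda_def TV_def XL_def[symmetric])
  fix j assume "j < length (map FF (tau_of n k I J))"
  then have j: "j < n" using XL_len by (simp add: tau_of_def vsub_def xLambda_def XL_def[symmetric])
  have "tau_of n k I J ! j = of_int (XL ! j) - rho_k n ! j"
    using j XL_len by (simp add: tau_of_def vsub_def xLambda_def XL_def[symmetric])
  then show "map FF (tau_of n k I J) ! j = map of_int TV ! j"
    using j XL_len by (simp add: FF_def TV_def rho_k_nth tau_of_def vsub_def xLambda_def XL_def[symmetric])
qed

definition cI :: "nat list \<Rightarrow> nat list \<Rightarrow> nat \<Rightarrow> int" where
  "cI a b i = (if i < q then - (int \<eta> + 2 * int (b ! i)) else if i < n - p then 0 else int \<epsilon> + 2 * int (a ! (n - 1 - i)))"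
definition LV :: "int list \<Rightarrow> nat list \<Rightarrow> nat list \<Rightarrow> int list" where
  "LV r a b = map (\<lambda>i. r ! i + int i - int q + cI a b i) [0..<n]"

lemma LV_len[simp]: "length (LV r a b) = n" by (simp add: LV_def)

lemma eqnF:
  assumes "length L = n" "length r = n" "length a = p" "length b = q"
  shows "vadd (vadd L (rho_k n)) (replicate n ((of_nat q - of_nat p) / 2)) = vadd (map of_int r) (corr n \<epsilon> \<eta> (p + q) a b)
     \<longleftrightarrow> map FF L = map of_int (LV r a b)"
proof -
  have pqn: "p + q \<le> n" using pq kn by simp
  have cl: "length (corr n \<epsilon> \<eta> (p + q) a b) = n" using corr_len[OF assms(3,4) pqn] .
  have cn: "corr n \<epsilon> \<eta> (p + q) a b ! i = of_int (cI a b i)" if "i < n" for i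
    using corr_nth[OF assms(3,4) pqn that] by (simp add: cI_def)
  have pr: "(of_nat p :: rat) = 2 * of_nat k - of_nat q" using pq by (simp add: of_nat_add[symmetric] flip: of_nat_mult)
  have "vadd (vadd L (rho_k n)) (replicate n ((of_nat q - of_nat p) / 2)) = vadd (map of_int r) (corr n \<epsilon> \<eta> (p + q) a b)
     \<longleftrightarrow> (\<forall>i<n. L ! i = of_int (r ! i) + corr n \<epsilon> \<eta> (p + q) a b ! i - rho_k n ! i - (of_nat q - of_nat p) / 2)"
    by (rule eqn_iff[OF assms(1,2) cl])
  also have "\<dots> \<longleftrightarrow> (\<forall>i<n. FF (L ! i) = of_int (LV r a b ! i))"
  proof -
    have "L ! i = of_int (r ! i) + corr n \<epsilon> \<eta> (p + q) a b ! i - rho_k n ! i - (of_nat q - of_nat p) / 2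
      \<longleftrightarrow> FF (L ! i) = of_int (LV r a b ! i)" if "i < n" for i
    proof -
      have e: "FF (of_int (r ! i) + corr n \<epsilon> \<eta> (p + q) a b ! i - rho_k n ! i - (of_nat q - of_nat p) / 2) = of_int (LV r a b ! i)"
        using that by (simp add: cn rho_k_nth FF_def LV_def pr field_simps)
      have fi: "FF x = FF y \<longleftrightarrow> x = y" for x y by (simp add: FF_def)
      show ?thesis using e fi by metis
    qed
    then show ?thesis by auto
  qed
  also have "\<dots> \<longleftrightarrow> map FF L = map of_int (LV r a b)"
    using assms(1) by (auto simp: list_eq_iff_nth_eq)
  finally show ?thesis .
qed

definition O1 :: "nat list \<Rightarrow> int list" where
  "O1 b = map (\<lambda>i. xs ! i + int i - int q - (int \<eta> + 2 * int (b ! i))) [0..<q]"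
definition Mv :: "int list \<Rightarrow> int list" where
  "Mv mid = map (\<lambda>m. mid ! m + int m) [0..<u + v]"
definition O2 :: "nat list \<Rightarrow> int list" where
  "O2 a = map (\<lambda>t. - ys ! (p - 1 - t) + int (u + v) + int t + int \<epsilon> + 2 * int (a ! (p - 1 - t))) [0..<p]"

lemma LV_split:
  assumes "length mid = u + v"
  shows "LV (xs @ mid @ map uminus (rev ys)) a b = O1 b @ Mv mid @ O2 a"
proof (rule nth_equalityI)
  show "length (LV (xs @ mid @ map uminus (rev ys)) a b) = length (O1 b @ Mv mid @ O2 a)"
    by (simp only: LV_len) (simp add: O1_def Mv_def O2_def nN, use pq in arith)
  fix i assume "i < length (LV (xs @ mid @ map uminus (rev ys)) a b)"
  then have i: "i < n" by simp
  show "LV (xs @ mid @ map uminus (rev ys)) a b ! i = (O1 b @ Mv mid @ O2 a) ! i"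
  proof (cases "i < q")
    case True then show ?thesis using i lxs by (simp add: LV_def O1_def cI_def nth_append)
  next
    case False
    show ?thesis
    proof (cases "i < q + (u + v)")
      case True
      have "i < n - p" using True nN pq by simp
      moreover have "i - q < u + v" using True False by linarith
      ultimately show ?thesis using True False i lxs assms by (simp add: LV_def Mv_def O1_def cI_def nth_append)
    next
      case False2: False
      define t where "t = i - q - (u + v)"
      have t: "t < p" "i = q + (u + v) + t" using i False2 nN pq by (auto simp: t_def)
      have "\<not> i < n - p" using False2 nN pq by simp
      moreover have "n - 1 - i = p - 1 - t" using t nN pq by simp
      moreover have "map uminus (rev ys) ! t = - ys ! (p - 1 - t)" using t lys by (simp add: rev_nth)
      moreover have "q + (u + v) + t < n" using i t by simp
      ultimately show ?thesis using t False False2 lxs assms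
        by (simp add: LV_def Mv_def O1_def O2_def cI_def nth_append)
    qed
  qed
qed

definition MID0 :: "int list" where "MID0 = map (\<lambda>i. i - int k) I @ map (\<lambda>j. int k - j) (rev J)"
definition SR0 :: "int list" where "SR0 = xs @ MID0 @ map uminus (rev ys)"
definition B0 :: "nat list" where "B0 = map (\<lambda>i. nat ((xs ! i + int i - int q - int \<eta> - int u) div 2)) [0..<q]"
definition A0 :: "nat list" where "A0 = map (\<lambda>j. nat ((ys ! j - int v - int (p - 1 - j) - int \<epsilon>) div 2)) [0..<p]"

lemma MID0_len: "length MID0 = u + v" using lI lJ by (simp add: MID0_def)

lemma r_decomp:
  assumes "length r = n" "take q r = xs" "drop (n - p) r = map uminus (rev ys)"
  shows "r = xs @ drop q (take (n - p) r) @ map uminus (rev ys)" "length (drop q (take (n - p) r)) = u + v"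
proof -
  have qn: "q \<le> n - p" using pq kn by simp
  have "take (n - p) r = take q (take (n - p) r) @ drop q (take (n - p) r)" by (rule append_take_drop_id[symmetric])
  also have "take q (take (n - p) r) = xs" using qn assms(2) by (simp add: min_def)
  finally have t: "take (n - p) r = xs @ drop q (take (n - p) r)" .
  define M where "M = drop q (take (n - p) r)"
  have t': "take (n - p) r = xs @ M" using t unfolding M_def .
  have "r = take (n - p) r @ drop (n - p) r" by (rule append_take_drop_id[symmetric])
  also have "\<dots> = (xs @ M) @ map uminus (rev ys)" by (simp only: t' assms(3))
  finally show "r = xs @ drop q (take (n - p) r) @ map uminus (rev ys)" unfolding M_def by simp
  show "length (drop q (take (n - p) r)) = u + v" using assms(1) nN pq by simp
qed

lemma mid_props:
  assumes "length r = n" "sorted_wrt (>) r" "distinct (map abs r)" "\<forall>x\<in>set r. 1 \<le> \<bar>x\<bar> \<and> \<bar>x\<bar> \<le> int n"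
    and "r = xs @ mid @ map uminus (rev ys)" "length mid = u + v"
  shows "sorted_wrt (>) mid" "distinct (map abs mid)" "set (map abs mid) = {1..int (u + v)}" "\<forall>x\<in>set mid. 1 \<le> \<bar>x\<bar>"
proof -
  show "sorted_wrt (>) mid" using assms(2,5) by (metis sorted_wrt_append)
  have d: "distinct (map abs xs @ map abs mid @ map abs (map uminus (rev ys)))" using assms(3,5) by simp
  then show "distinct (map abs mid)" by simp
  have axs: "set (map abs xs) = set xs" using rxs by force
  have ays: "set (map abs (map uminus (rev ys))) = set ys" using rys by force
  have sub: "set (map abs mid) \<subseteq> {1..int (u + v)}"
  proof
    fix z assume z: "z \<in> set (map abs mid)"
    then have "1 \<le> z" "z \<le> int n" using assms(4,5) by auto
    moreover have "z \<notin> set xs" using d z axs by auto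
    moreover have "z \<notin> set ys" using d z ays by auto
    ultimately show "z \<in> {1..int (u + v)}" using XYset by auto
  qed
  have "card (set (map abs mid)) = u + v" using distinct_card[OF \<open>distinct (map abs mid)\<close>] assms(6) by simp
  then show "set (map abs mid) = {1..int (u + v)}" using card_subset_eq[OF _ sub] by simp
  show "\<forall>x\<in>set mid. 1 \<le> \<bar>x\<bar>" using assms(4,5) by auto
qed

lemma TA_ge: "\<forall>x\<in>set TA. int u \<le> x"
proof
  fix x assume "x \<in> set TA"
  then obtain r where r: "r < u" "x = I ! r - int k + int r" by (auto simp: TA_def)
  then show "int u \<le> x" using I_lb[OF r(1)] by simp
qed

lemma TC_lt: "\<forall>x\<in>set TC. x < int u"
proof
  fix x assume "x \<in> set TC"
  then obtain s where s: "s < v" "x = int u + int s + int k - J ! (v - 1 - s)" by (auto simp: TA_def TC_def)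
  then show "x < int u" using J_lb[OF s(1)] by simp
qed

lemma TA_len: "length TA = u" by (simp add: TA_def)
lemma TC_len: "length TC = v" by (simp add: TC_def)

lemma cnt_lt: "length (filter (\<lambda>x. x < int u) TV) = v"
proof -
  have "filter (\<lambda>x. x < int u) TA = []" using TA_ge by (auto simp: filter_empty_conv)
  moreover have "filter (\<lambda>x. x < int u) TC = TC" using TC_lt by simp
  ultimately show ?thesis by (simp add: TV_split TC_len)
qed

lemma cnt_gt: "length (filter (\<lambda>x. int u < x) TV) \<le> u"
proof -
  have "filter (\<lambda>x. int u < x) TC = []" using TC_lt by (auto simp: filter_empty_conv)
  then have "length (filter (\<lambda>x. int u < x) TV) = length (filter (\<lambda>x. int u < x) TA)" by (simp add: TV_split)
  also have "\<dots> \<le> u" using length_filter_le[of _ TA] TA_len by simp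
  finally show ?thesis .
qed

lemma mset_cnt: "mset X = mset Y \<Longrightarrow> length (filter P X) = length (filter P Y)"
  by (metis mset_filter size_mset)

lemma Mv_len[simp]: "length (Mv mid) = u + v" by (simp add: Mv_def)
lemma Mv_nth: "m < u + v \<Longrightarrow> Mv mid ! m = mid ! m + int m" by (simp add: Mv_def)

lemma sign_split:
  assumes sm: "sorted_wrt (>) mid" and lm: "length mid = u + v" and am: "\<forall>x\<in>set mid. 1 \<le> \<bar>x\<bar>"
    and ms: "mset (o1 @ Mv mid @ o2) = mset TV"
  shows "\<forall>m<u. 0 < mid ! m" "\<forall>m. u \<le> m \<and> m < u + v \<longrightarrow> mid ! m < 0"
proof -
  have le: "length (filter P (Mv mid)) \<le> length (filter P TV)" for P
    using mset_cnt[OF ms, of P] by simp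
  have a1: "1 \<le> \<bar>mid ! m\<bar>" if "m < u + v" for m using am that lm by simp
  show "\<forall>m<u. 0 < mid ! m"
  proof (rule ccontr)
    assume "\<not> (\<forall>m<u. 0 < mid ! m)"
    then obtain m0 where m0: "m0 < u" "\<not> 0 < mid ! m0" by auto
    then have neg: "mid ! m0 \<le> -1" using a1[of m0] by auto
    have "{m0..<u+v} \<subseteq> {i. i < length (Mv mid) \<and> Mv mid ! i < int u}"
    proof
      fix m assume m: "m \<in> {m0..<u+v}"
      then have "mid ! m + int (m - m0) \<le> mid ! m0" using dec_gap[OF sm, of m0 m] lm by auto
      then have "mid ! m + int m < int u" using neg m m0 by auto
      then show "m \<in> {i. i < length (Mv mid) \<and> Mv mid ! i < int u}" using m by (simp add: Mv_nth)
    qed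
    then have "card {m0..<u+v} \<le> card {i. i < length (Mv mid) \<and> Mv mid ! i < int u}"
      by (rule card_mono[rotated]) simp
    then have "u + v - m0 \<le> length (filter (\<lambda>x. x < int u) (Mv mid))"
      by (simp add: length_filter_conv_card)
    then show False using le[of "\<lambda>x. x < int u"] cnt_lt m0 by simp
  qed
  show "\<forall>m. u \<le> m \<and> m < u + v \<longrightarrow> mid ! m < 0"
  proof (rule ccontr)
    assume "\<not> (\<forall>m. u \<le> m \<and> m < u + v \<longrightarrow> mid ! m < 0)"
    then obtain m0 where m0: "u \<le> m0" "m0 < u + v" "\<not> mid ! m0 < 0" by auto
    then have pos: "1 \<le> mid ! m0" using a1[of m0] by auto
    have "{0..m0} \<subseteq> {i. i < length (Mv mid) \<and> int u < Mv mid ! i}"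
    proof
      fix m assume m: "m \<in> {0..m0}"
      then have "mid ! m0 + int (m0 - m) \<le> mid ! m" using dec_gap[OF sm, of m m0] lm m0 by auto
      then have "int u < mid ! m + int m" using pos m m0 by auto
      then show "m \<in> {i. i < length (Mv mid) \<and> int u < Mv mid ! i}" using m m0 by (simp add: Mv_nth)
    qed
    then have "card {0..m0} \<le> card {i. i < length (Mv mid) \<and> int u < Mv mid ! i}"
      by (rule card_mono[rotated]) simp
    then have "m0 + 1 \<le> length (filter (\<lambda>x. int u < x) (Mv mid))"
      by (simp add: length_filter_conv_card)
    then show False using le[of "\<lambda>x. int u < x"] cnt_gt m0 by simp
  qed
qed

lemma mid_det:
  assumes sm: "sorted_wrt (>) mid" and lm: "length mid = u + v" and am: "\<forall>x\<in>set mid. 1 \<le> \<bar>x\<bar>"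
    and dm: "distinct (map abs mid)" and stm: "set (map abs mid) = {1..int (u + v)}"
    and ms: "mset (o1 @ Mv mid @ o2) = mset TV"
  shows "mid = MID0"
proof -
  note sg = sign_split[OF sm lm am ms]
  have ge: "int u \<le> Mv mid ! m" if "m < u" for m
  proof -
    have "mid ! (u - 1) + int (u - 1 - m) \<le> mid ! m" using dec_gap[OF sm, of m "u - 1"] that lm by simp
    moreover have "0 < mid ! (u - 1)" using sg(1) that by simp
    ultimately show ?thesis using that by (simp add: Mv_nth)
  qed
  have lt: "Mv mid ! m < int u" if "u \<le> m" "m < u + v" for m
  proof -
    have "mid ! m + int (m - u) \<le> mid ! u" using dec_gap[OF sm, of u m] that lm by simp
    moreover have "mid ! u < 0" using sg(2) that by simp
    ultimately show ?thesis using that by (simp add: Mv_nth)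
  qed
  have fMv: "filter (\<lambda>x. x < int u) (Mv mid) = drop u (Mv mid)"
  proof -
    have "filter (\<lambda>x. x < int u) (take u (Mv mid)) = []"
      using ge by (auto simp: filter_empty_conv in_set_conv_nth) (meson ge not_le)
    moreover have "\<forall>x\<in>set (drop u (Mv mid)). x < int u"
    proof
      fix x assume "x \<in> set (drop u (Mv mid))"
      then obtain i where "i < v" "x = Mv mid ! (u + i)" by (auto simp: in_set_conv_nth)
      then show "x < int u" using lt[of "u + i"] by simp
    qed
    then have "filter (\<lambda>x. x < int u) (drop u (Mv mid)) = drop u (Mv mid)" by (simp add: filter_id_conv)
    ultimately show ?thesis by (metis append_take_drop_id filter_append self_append_conv2)
  qed
  have "length (filter (\<lambda>x. x < int u) (o1 @ Mv mid @ o2)) = v" using mset_cnt[OF ms] cnt_lt by simp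
  then have "filter (\<lambda>x. x < int u) o1 = [] \<and> filter (\<lambda>x. x < int u) o2 = []" using fMv by simp
  then have "filter (\<lambda>x. x < int u) (o1 @ Mv mid @ o2) = drop u (Mv mid)" using fMv by simp
  moreover have "filter (\<lambda>x. x < int u) TV = TC"
  proof -
    have "filter (\<lambda>x. x < int u) TA = []" using TA_ge by (auto simp: filter_empty_conv)
    moreover have "filter (\<lambda>x. x < int u) TC = TC" using TC_lt by simp
    ultimately show ?thesis by (simp add: TV_split)
  qed
  moreover have "mset (filter (\<lambda>x. x < int u) (o1 @ Mv mid @ o2)) = mset (filter (\<lambda>x. x < int u) TV)"
    using ms by (simp only: mset_filter)
  ultimately have me: "mset (drop u (Mv mid)) = mset TC" by simp
  have s1: "sorted_wrt (\<ge>) (drop u (Mv mid))"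
  proof (subst sorted_wrt_iff_nth_less, intro allI impI)
    fix i j assume ij: "i < j" "j < length (drop u (Mv mid))"
    then have "mid ! (u + j) + int (u + j - (u + i)) \<le> mid ! (u + i)" using dec_gap[OF sm, of "u + i" "u + j"] lm by simp
    then show "drop u (Mv mid) ! j \<le> drop u (Mv mid) ! i" using ij by (simp add: Mv_nth)
  qed
  have s2: "sorted_wrt (\<ge>) TC"
  proof (subst sorted_wrt_iff_nth_less, intro allI impI)
    fix i j assume ij: "i < j" "j < length TC"
    then have "J ! (v - 1 - i) + int (v - 1 - i - (v - 1 - j)) \<le> J ! (v - 1 - j)"
      using dec_gap[OF sJ, of "v - 1 - j" "v - 1 - i"] lJ TC_len by simp
    then show "TC ! j \<le> TC ! i" using ij TC_len by (simp add: TC_def)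
  qed
  have eqC: "drop u (Mv mid) = TC" by (rule desc_eq[OF s1 s2 me])
  have dmid: "drop u mid = map (\<lambda>j. int k - j) (rev J)"
  proof (rule nth_equalityI)
    show "length (drop u mid) = length (map (\<lambda>j. int k - j) (rev J))" using lm lJ by simp
    fix s assume "s < length (drop u mid)"
    then have s: "s < v" using lm by simp
    have "drop u (Mv mid) ! s = TC ! s" using eqC by simp
    then have "mid ! (u + s) + int (u + s) = int u + int s + int k - J ! (v - 1 - s)"
      using s lm by (simp add: Mv_nth TC_def)
    then show "drop u mid ! s = map (\<lambda>j. int k - j) (rev J) ! s" using s lm lJ by (simp add: rev_nth)
  qed
  have tpos: "\<forall>x\<in>set (take u mid). 0 < x" using sg(1) lm by (auto simp: in_set_conv_nth)
  have dist2: "distinct (map abs (take u mid) @ map abs (drop u mid))"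
    using dm by (metis append_take_drop_id map_append)
  have st: "set (take u mid) = {1..int (u + v)} - (\<lambda>j. j - int k) ` set J"
  proof -
    have a1: "abs ` set (take u mid) = set (take u mid)" using tpos by force
    have Jk: "\<forall>j\<in>set J. int k + 1 \<le> j" using IJu by auto
    have a2: "abs ` set (drop u mid) = (\<lambda>j. j - int k) ` set J"
    proof -
      have "abs ` set (drop u mid) = (\<lambda>j. \<bar>int k - j\<bar>) ` set J" unfolding dmid by (simp add: image_image)
      also have "\<dots> = (\<lambda>j. j - int k) ` set J" using Jk by (intro image_cong) auto
      finally show ?thesis .
    qed
    have "set (map abs mid) = abs ` set (take u mid) \<union> abs ` set (drop u mid)"
      by (metis append_take_drop_id image_Un list.set_map set_append)
    moreover have "abs ` set (take u mid) \<inter> abs ` set (drop u mid) = {}" using dist2 by simp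
    ultimately show ?thesis using stm a1 a2 by auto
  qed
  have "set (map (\<lambda>i. i - int k) I) = {1..int (u + v)} - (\<lambda>j. j - int k) ` set J"
  proof -
    have "set I = {int k + 1..int n - int k} - set J" using IJu IJd by auto
    then have "set (map (\<lambda>i. i - int k) I) = (\<lambda>i. i - int k) ` ({int k + 1..int n - int k} - set J)" by simp
    also have "\<dots> = (\<lambda>i. i - int k) ` {int k + 1..int n - int k} - (\<lambda>i. i - int k) ` set J"
      by (rule image_set_diff) (simp add: inj_def)
    also have "(\<lambda>i. i - int k) ` {int k + 1..int n - int k} = {1..int (u + v)}"
    proof -
      have "(\<lambda>i. i - int k) ` {int k + 1..int n - int k} = {int k + 1 - int k..int n - int k - int k}"
        by (simp add: image_diff_atLeastAtMost)
      then show ?thesis using nN by simp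
    qed
    finally show ?thesis .
  qed
  then have seq: "set (take u mid) = set (map (\<lambda>i. i - int k) I)" using st by simp
  have stk: "sorted_wrt (>) (take u mid)" using sm by (metis append_take_drop_id sorted_wrt_append)
  have sIk: "sorted_wrt (>) (map (\<lambda>i. i - int k) I)" using sI by (simp add: sorted_wrt_map)
  have "take u mid = map (\<lambda>i. i - int k) I" by (rule strict_desc_set_eq[OF stk sIk seq])
  then show ?thesis using dmid unfolding MID0_def by (metis append_take_drop_id)
qed

lemma Mv_MID0: "Mv MID0 = TA @ TC"
proof (rule nth_equalityI)
  show "length (Mv MID0) = length (TA @ TC)" by (simp add: TA_len TC_len)
  fix m assume "m < length (Mv MID0)"
  then have m: "m < u + v" by simp
  show "Mv MID0 ! m = (TA @ TC) ! m"
  proof (cases "m < u")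
    case True then show ?thesis using m lI by (simp add: Mv_nth MID0_def TA_def nth_append)
  next
    case False
    then have "m - u < v" using m by simp
    then show ?thesis using False m lI lJ by (simp add: Mv_nth MID0_def TA_def TC_def nth_append rev_nth)
  qed
qed

lemma O1_len[simp]: "length (O1 b) = q" by (simp add: O1_def)
lemma O2_len[simp]: "length (O2 a) = p" by (simp add: O2_def)

lemma ab_det:
  assumes la: "length a = p" and lb: "length b = q"
    and ms: "mset (O1 b @ Mv MID0 @ O2 a) = mset TV"
  shows "a = A0" "b = B0"
proof -
  have "mset (O1 b) + (mset TA + mset TC) + mset (O2 a) = mset TA + replicate_mset (2 * k) (int u) + mset TC"
    using ms by (simp add: Mv_MID0 TV_split ac_simps)
  then have mm: "mset (O1 b) + mset (O2 a) = replicate_mset (2 * k) (int u)" by (simp add: ac_simps)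
  have all1: "x = int u" if "x \<in> set (O1 b)" for x
  proof -
    have "x \<in># mset (O1 b) + mset (O2 a)" using that by simp
    then show ?thesis unfolding mm by (simp split: if_splits)
  qed
  have all2: "x = int u" if "x \<in> set (O2 a)" for x
  proof -
    have "x \<in># mset (O1 b) + mset (O2 a)" using that by simp
    then show ?thesis unfolding mm by (simp split: if_splits)
  qed
  show "b = B0"
  proof (rule nth_equalityI)
    show "length b = length B0" using lb by (simp add: B0_def)
    fix i assume "i < length b"
    then have i: "i < q" using lb by simp
    have "O1 b ! i = int u" using all1 i by simp
    then have "xs ! i + int i - int q - (int \<eta> + 2 * int (b ! i)) = int u" using i by (simp add: O1_def)
    then have "int (b ! i) = (xs ! i + int i - int q - int \<eta> - int u) div 2" by simp
    then show "b ! i = B0 ! i" using i by (simp add: B0_def)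
  qed
  show "a = A0"
  proof (rule nth_equalityI)
    show "length a = length A0" using la by (simp add: A0_def)
    fix j assume "j < length a"
    then have j: "j < p" using la by simp
    define t where "t = p - 1 - j"
    have t: "t < p" "p - 1 - t = j" using j by (auto simp: t_def)
    have "O2 a ! t = int u" using all2 t by simp
    then have "- ys ! j + int (u + v) + int t + int \<epsilon> + 2 * int (a ! j) = int u" using t by (simp add: O2_def)
    then have "int (a ! j) = (ys ! j - int v - int (p - 1 - j) - int \<epsilon>) div 2" using t by (simp add: t_def)
    then show "a ! j = A0 ! j" using j by (simp add: A0_def)
  qed
qed

definition Lof :: "int list \<Rightarrow> nat list \<Rightarrow> nat list \<Rightarrow> rat list" where
  "Lof r a b = map (\<lambda>z. of_int z - ((of_nat n - 1) / 2 - of_nat k)) (LV r a b)"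

lemma FF_Lof: "map FF L = map of_int (LV r a b) \<Longrightarrow> L = Lof r a b"
proof -
  assume h: "map FF L = map of_int (LV r a b)"
  have "L = map (\<lambda>z. z - ((of_nat n - 1) / 2 - of_nat k)) (map FF L)" by (simp add: FF_def o_def)
  then show ?thesis using h by (simp add: Lof_def o_def)
qed

lemma tau_len: "length (tau_of n k I J) = n"
  using XL_len by (simp add: tau_of_def vsub_def xLambda_def XL_def[symmetric])

lemma sol_det:
  assumes sol: "solE n p q \<epsilon> \<eta> (tau_of n k I J) w \<sigma> a b"
    and tk: "take q (sp_act n \<sigma> (rho_g n)) = map of_int xs"
    and dr: "drop (n - p) (sp_act n \<sigma> (rho_g n)) = map of_int (map uminus (rev ys))"
  shows "srI n \<sigma> = SR0 \<and> a = A0 \<and> b = B0 \<and> perm_act w (tau_of n k I J) = Lof SR0 A0 B0"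
proof -
  define r where "r = srI n \<sigma>"
  define L where "L = perm_act w (tau_of n k I J)"
  have wp: "w permutes {..<n}" and W: "W1 n \<sigma>" and la: "length a = p" and lb: "length b = q"
    and eq: "vadd (vadd L (rho_k n)) (replicate n ((of_nat q - of_nat p) / 2)) = vadd (sp_act n \<sigma> (rho_g n)) (corr n \<epsilon> \<eta> (p + q) a b)"
    using sol by (auto simp: solE_def L_def)
  have sp: "signed_perm n \<sigma>" using W by (simp add: W1_def)
  have spr: "sp_act n \<sigma> (rho_g n) = map of_int r" using sp_act_srI[OF sp] by (simp add: r_def)
  have lr: "length r = n" by (simp add: r_def)
  have "sorted_wrt (\<ge>) (map (of_int :: int \<Rightarrow> rat) r)" using W spr by (simp add: W1_def)
  then have sge: "sorted_wrt (\<ge>) r" by (simp add: sorted_wrt_map)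
  have dr_abs: "distinct (map abs r)" using srI_distinct[OF sp] by (simp add: r_def)
  then have "distinct r" by (simp add: distinct_map)
  then have sgt: "sorted_wrt (>) r" using ge_distinct_gt[OF sge] by simp
  have rng: "\<forall>x\<in>set r. 1 \<le> \<bar>x\<bar> \<and> \<bar>x\<bar> \<le> int n"
    using srI_abs(2,3)[OF sp] by (auto simp: r_def in_set_conv_nth)
  have tk': "take q r = xs" using tk spr by (simp add: take_map map_of_int_inj)
  have dr': "drop (n - p) r = map uminus (rev ys)" using dr spr by (simp add: drop_map map_of_int_inj)
  define mid where "mid = drop q (take (n - p) r)"
  have rd: "r = xs @ mid @ map uminus (rev ys)" and lm: "length mid = u + v"
    using r_decomp[OF lr tk' dr'] by (simp_all add: mid_def)
  note mp = mid_props[OF lr sgt dr_abs rng rd lm]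
  have lL: "length L = n" using tau_len by (simp add: L_def perm_act_def)
  have eqF: "map FF L = map of_int (LV r a b)" using eqnF[OF lL lr la lb] eq spr by simp
  have "mset L = mset (tau_of n k I J)"
    unfolding L_def perm_act_def by (rule mset_permute_list) (use permutes_inv[OF wp] tau_len in simp)
  then have "mset (map FF L) = mset (map FF (tau_of n k I J))" by simp
  then have "mset (map of_int (LV r a b) :: rat list) = mset (map of_int TV)" using eqF tauF by simp
  then have ms: "mset (LV r a b) = mset TV" by (rule mset_of_int_inj)
  then have ms2: "mset (O1 b @ Mv mid @ O2 a) = mset TV" using LV_split[OF lm] rd by simp
  have midE: "mid = MID0" by (rule mid_det[OF mp(1) lm mp(4) mp(2) mp(3) ms2])
  then have rE: "r = SR0" using rd by (simp add: SR0_def)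
  have ab: "a = A0" "b = B0" using ab_det[OF la lb] ms2 midE by auto
  have "L = Lof r a b" by (rule FF_Lof[OF eqF])
  then show ?thesis using rE ab by (simp add: r_def L_def)
qed

lemma SR0_len: "length SR0 = n" using MID0_len lxs lys nN pq by (simp add: SR0_def)

lemma MID0_props: "sorted_wrt (>) MID0" "\<forall>x\<in>set MID0. 1 \<le> \<bar>x\<bar> \<and> \<bar>x\<bar> \<le> int (u + v)" "distinct (map abs MID0)"
proof -
  have Ir: "\<forall>i\<in>set I. int k + 1 \<le> i \<and> i \<le> int n - int k" and Jr: "\<forall>j\<in>set J. int k + 1 \<le> j \<and> j \<le> int n - int k"
    using IJu by auto
  have s1: "sorted_wrt (>) (map (\<lambda>i. i - int k) I)" using sI by (simp add: sorted_wrt_map)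
  have s2: "sorted_wrt (>) (map (\<lambda>j. int k - j) (rev J))" using sJ by (simp add: sorted_wrt_map sorted_wrt_rev)
  have c: "\<forall>x\<in>set (map (\<lambda>i. i - int k) I). \<forall>y\<in>set (map (\<lambda>j. int k - j) (rev J)). y < x"
  proof (intro ballI)
    fix x y assume "x \<in> set (map (\<lambda>i. i - int k) I)" "y \<in> set (map (\<lambda>j. int k - j) (rev J))"
    then obtain i j where "i \<in> set I" "j \<in> set J" "x = i - int k" "y = int k - j" by auto
    then show "y < x" using Ir Jr by force
  qed
  show "sorted_wrt (>) MID0" unfolding MID0_def using s1 s2 c by (simp add: sorted_wrt_append)
  show "\<forall>x\<in>set MID0. 1 \<le> \<bar>x\<bar> \<and> \<bar>x\<bar> \<le> int (u + v)" unfolding MID0_def using Ir Jr nN by auto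
  have "map abs MID0 = map (\<lambda>i. i - int k) I @ map (\<lambda>j. j - int k) (rev J)"
    unfolding MID0_def using Ir Jr by auto
  moreover have "distinct (map (\<lambda>i. i - int k) I @ map (\<lambda>j. j - int k) (rev J))"
    using sorted_gt_distinct[OF sI] sorted_gt_distinct[OF sJ] IJd by (auto simp: distinct_map inj_on_def)
  ultimately show "distinct (map abs MID0)" by simp
qed

lemma SR0_props: "sorted_wrt (>) SR0" "distinct (map abs SR0)" "\<forall>x\<in>set SR0. 1 \<le> \<bar>x\<bar> \<and> \<bar>x\<bar> \<le> int n"
proof -
  note M = MID0_props
  have xr: "\<forall>x\<in>set xs. int (u + v) + 1 \<le> x \<and> x \<le> int n" using rxs by auto
  have yr: "\<forall>y\<in>set ys. int (u + v) + 1 \<le> y \<and> y \<le> int n" using rys by auto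
  have s3: "sorted_wrt (>) (map uminus (rev ys))" using sys by (simp add: sorted_wrt_map sorted_wrt_rev)
  have c1: "\<forall>x\<in>set xs. \<forall>y\<in>set MID0. y < x" using xr M(2) by fastforce
  have c2: "\<forall>x\<in>set MID0. \<forall>y\<in>set ys. - y < x" using yr M(2) by fastforce
  have c3: "\<forall>x\<in>set xs. \<forall>y\<in>set ys. - y < x" using xr yr by fastforce
  show "sorted_wrt (>) SR0" unfolding SR0_def using sxs M(1) s3 c1 c2 c3 by (auto simp: sorted_wrt_append)
  have "map abs xs = xs" by (rule map_idI) (use xr in auto)
  moreover have "map abs (map uminus (rev ys)) = rev ys" unfolding map_map by (rule map_idI) (use yr in auto)
  ultimately have "map abs SR0 = xs @ map abs MID0 @ rev ys" unfolding SR0_def by simp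
  moreover have "distinct (xs @ map abs MID0 @ rev ys)"
  proof -
    have "set (map abs MID0) \<inter> set xs = {}" using M(2) xr by fastforce
    moreover have "set (map abs MID0) \<inter> set ys = {}" using M(2) yr by fastforce
    moreover have "set xs \<inter> set ys = {}" using dxy by auto
    ultimately show ?thesis using sorted_gt_distinct[OF sxs] sorted_gt_distinct[OF sys] M(3) by auto
  qed
  ultimately show "distinct (map abs SR0)" by simp
  show "\<forall>x\<in>set SR0. 1 \<le> \<bar>x\<bar> \<and> \<bar>x\<bar> \<le> int n" unfolding SR0_def using xr yr M(2) nN by fastforce
qed

lemma B0_len: "length B0 = q" by (simp add: B0_def)
lemma A0_len: "length A0 = p" by (simp add: A0_def)

lemma O1_B0: "O1 B0 = replicate q (int u)"
proof (rule nth_equalityI)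
  show "length (O1 B0) = length (replicate q (int u))" by simp
  fix i assume "i < length (O1 B0)"
  then have i: "i < q" by simp
  define X where "X = xs ! i + int i - int q - int \<eta> - int u"
  have "[xs ! (Suc i - 1) + int u + int q + 1 - int (Suc i) = int \<eta>] (mod 2)" by (rule bspec[OF parx]) (use i in simp)
  then have "(xs ! i + int u + int q - int i) mod 2 = int \<eta> mod 2" by (simp add: cong_def add.assoc add_diff_eq)
  then have "X mod 2 = 0" unfolding X_def by presburger
  moreover have "- 1 \<le> X" using xs_lb[OF i] eta unfolding X_def by auto
  ultimately have "2 * int (nat (X div 2)) = X" by (rule half_nat)
  then show "O1 B0 ! i = replicate q (int u) ! i" using i by (simp add: O1_def B0_def X_def)
qed

lemma O2_A0: "O2 A0 = replicate p (int u)"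
proof (rule nth_equalityI)
  show "length (O2 A0) = length (replicate p (int u))" by simp
  fix t assume "t < length (O2 A0)"
  then have t: "t < p" by simp
  define j where "j = p - 1 - t"
  have j: "j < p" "p - 1 - j = t" "p - Suc t = j" using t by (auto simp: j_def)
  define Y where "Y = ys ! j - int v - int (p - 1 - j) - int \<epsilon>"
  have "[ys ! (p - Suc t) + int v + int (Suc t) - 1 = int \<epsilon>] (mod 2)" by (rule bspec[OF pary]) (use t in simp)
  then have "(ys ! j + int v + int t) mod 2 = int \<epsilon> mod 2" using j by (simp add: cong_def add.assoc)
  then have "Y mod 2 = 0" unfolding Y_def using j by presburger
  moreover have "- 1 \<le> Y" using ys_lb[OF j(1)] eps j unfolding Y_def by auto
  ultimately have "2 * int (nat (Y div 2)) = Y" by (rule half_nat)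
  moreover have a: "A0 ! j = nat (Y div 2)" using j by (simp add: A0_def Y_def)
  moreover have "O2 A0 ! t = - ys ! j + int (u + v) + int t + int \<epsilon> + 2 * int (A0 ! j)" using t j by (simp add: O2_def)
  ultimately have "O2 A0 ! t = - ys ! j + int (u + v) + int t + int \<epsilon> + Y" by simp
  then show "O2 A0 ! t = replicate p (int u) ! t" using t j(2) unfolding Y_def by simp
qed

lemma B0_sorted: "sorted_wrt (\<ge>) B0"
proof (subst sorted_wrt_iff_nth_less, intro allI impI)
  fix i j assume ij: "i < j" "j < length B0"
  then have "xs ! j + int (j - i) \<le> xs ! i" using dec_gap[OF sxs, of i j] lxs B0_len by simp
  then have "(xs ! j + int j - int q - int \<eta> - int u) div 2 \<le> (xs ! i + int i - int q - int \<eta> - int u) div 2"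
    using ij by (intro zdiv_mono1) auto
  then show "B0 ! j \<le> B0 ! i" using ij B0_len by (simp add: B0_def nat_mono)
qed

lemma A0_sorted: "sorted_wrt (\<ge>) A0"
proof (subst sorted_wrt_iff_nth_less, intro allI impI)
  fix i j assume ij: "i < j" "j < length A0"
  then have "ys ! j + int (j - i) \<le> ys ! i" using dec_gap[OF sys, of i j] lys A0_len by simp
  then have "(ys ! j - int v - int (p - 1 - j) - int \<epsilon>) div 2 \<le> (ys ! i - int v - int (p - 1 - i) - int \<epsilon>) div 2"
    using ij A0_len by (intro zdiv_mono1) auto
  then show "A0 ! j \<le> A0 ! i" using ij A0_len by (simp add: A0_def nat_mono)
qed

lemma sol_ex: "\<exists>w \<sigma>. solE n p q \<epsilon> \<eta> (tau_of n k I J) w \<sigma> A0 B0 \<and>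
   take q (sp_act n \<sigma> (rho_g n)) = map of_int xs \<and>
   drop (n - p) (sp_act n \<sigma> (rho_g n)) = map of_int (map uminus (rev ys))"
proof -
  obtain \<sigma> where sp: "signed_perm n \<sigma>" and sr: "srI n \<sigma> = SR0"
    using srI_exists[OF SR0_len SR0_props(2,3)] by blast
  have spr: "sp_act n \<sigma> (rho_g n) = map of_int SR0" using sp_act_srI[OF sp] sr by simp
  have "sorted_wrt (\<ge>) SR0" by (rule sorted_wrt_mono_rel[OF _ SR0_props(1)]) simp
  then have W: "W1 n \<sigma>" using sp spr by (simp add: W1_def sorted_wrt_map)
  define L where "L = Lof SR0 A0 B0"
  have lv: "LV SR0 A0 B0 = replicate q (int u) @ (TA @ TC) @ replicate p (int u)"
    using LV_split[OF MID0_len] by (simp add: SR0_def O1_B0 O2_A0 Mv_MID0)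
  have rr: "replicate (2 * k) (int u) = replicate q (int u) @ replicate p (int u)"
    using pq by (simp add: replicate_add[symmetric] add.commute)
  have "mset (LV SR0 A0 B0) = mset TV"
    unfolding lv TV_split rr by (simp add: ac_simps)
  have FL: "map FF L = map of_int (LV SR0 A0 B0)" by (simp add: L_def Lof_def FF_def o_def)
  have lL: "length L = n" by (simp add: L_def Lof_def)
  define G where "G x = x - ((of_nat n - 1) / 2 - of_nat k)" for x :: rat
  have GF: "map G (map FF X) = X" for X by (simp add: G_def FF_def o_def)
  have "mset (map FF L) = mset (map FF (tau_of n k I J))"
    using FL tauF \<open>mset (LV SR0 A0 B0) = mset TV\<close> by (metis mset_map)
  then have "mset (map G (map FF L)) = mset (map G (map FF (tau_of n k I J)))" by (metis mset_map)
  then have mL: "mset L = mset (tau_of n k I J)" by (simp only: GF)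
  obtain pp where pp: "pp permutes {..<length (tau_of n k I J)}" "permute_list pp (tau_of n k I J) = L"
    using mset_eq_permutation[OF mL] by blast
  define w where "w = inv pp"
  have wp: "w permutes {..<n}" using permutes_inv[OF pp(1)] tau_len by (simp add: w_def)
  have pa: "perm_act w (tau_of n k I J) = L" using pp permutes_inv_inv[OF pp(1)] by (simp add: perm_act_def w_def)
  have eq: "vadd (vadd L (rho_k n)) (replicate n ((of_nat q - of_nat p) / 2)) = vadd (sp_act n \<sigma> (rho_g n)) (corr n \<epsilon> \<eta> (p + q) A0 B0)"
    using eqnF[OF lL SR0_len A0_len B0_len] FL spr by simp
  have sol: "solE n p q \<epsilon> \<eta> (tau_of n k I J) w \<sigma> A0 B0"
    unfolding solE_def using wp W A0_len B0_len A0_sorted B0_sorted eq pa by simp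
  have "take q SR0 = xs" using lxs by (simp add: SR0_def)
  moreover have "drop (n - p) SR0 = map uminus (rev ys)"
  proof -
    have "n - p = length (xs @ MID0)" using lxs MID0_len nN pq by simp
    then show ?thesis by (simp add: SR0_def)
  qed
  ultimately have "take q (sp_act n \<sigma> (rho_g n)) = map of_int xs \<and>
     drop (n - p) (sp_act n \<sigma> (rho_g n)) = map of_int (map uminus (rev ys))"
    using spr by (simp add: take_map drop_map)
  then show ?thesis using sol by blast
qed

end

theorem mainTheorem5:
  fixes n k p q u v \<epsilon> \<eta> :: nat and I J xs ys :: "int list"
  assumes "k \<ge> 1" and "p > 0" and "q > 0" and "p + q = 2 * k" and "2 * k \<le> n"
    and "\<epsilon> \<in> {0, 1}" and "\<eta> \<in> {0, 1}"
    and "special_data n k u v I J"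
    and "length xs = q" and "sorted_wrt (>) xs"
    and "length ys = p" and "sorted_wrt (>) ys"
    and "\<forall>x\<in>set xs. int (u + v + 1) \<le> x \<and> x \<le> int n"
    and "\<forall>y\<in>set ys. int (u + v + 1) \<le> y \<and> y \<le> int n"
    and "\<forall>x\<in>set xs. \<forall>y\<in>set ys. x \<noteq> y"
    and "\<forall>i\<in>{1..q}. [xs ! (i - 1) + int u + int q + 1 - int i = int \<eta>] (mod 2)"
    and "\<forall>m\<in>{1..p}. [ys ! (p - m) + int v + int m - 1 = int \<epsilon>] (mod 2)"
  shows "\<exists>!t. t \<in> {(perm_act w (tau_of n k I J), \<sigma>, a, b) | w \<sigma> a b.
            solE n p q \<epsilon> \<eta> (tau_of n k I J) w \<sigma> a b \<and>
            take q (sp_act n \<sigma> (rho_g n)) = map of_int xs \<and>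
            drop (n - p) (sp_act n \<sigma> (rho_g n)) = map of_int (map uminus (rev ys))}"
proof -
  interpret M: MT n k p q u v \<epsilon> \<eta> I J xs ys
    unfolding MT_def using assms by blast
  obtain w \<sigma> where ex: "solE n p q \<epsilon> \<eta> (tau_of n k I J) w \<sigma> M.A0 M.B0"
    "take q (sp_act n \<sigma> (rho_g n)) = map of_int xs"
    "drop (n - p) (sp_act n \<sigma> (rho_g n)) = map of_int (map uminus (rev ys))"
    using M.sol_ex by blast
  note d1 = M.sol_det[OF ex]
  have sp1: "signed_perm n \<sigma>" using ex(1) by (simp add: solE_def W1_def)
  show ?thesis
  proof (rule ex1I[of _ "(perm_act w (tau_of n k I J), \<sigma>, M.A0, M.B0)"])
    show "(perm_act w (tau_of n k I J), \<sigma>, M.A0, M.B0) \<in> {(perm_act w (tau_of n k I J), \<sigma>, a, b) | w \<sigma> a b.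
            solE n p q \<epsilon> \<eta> (tau_of n k I J) w \<sigma> a b \<and>
            take q (sp_act n \<sigma> (rho_g n)) = map of_int xs \<and>
            drop (n - p) (sp_act n \<sigma> (rho_g n)) = map of_int (map uminus (rev ys))}"
      using ex by blast
    fix t assume "t \<in> {(perm_act w (tau_of n k I J), \<sigma>, a, b) | w \<sigma> a b.
            solE n p q \<epsilon> \<eta> (tau_of n k I J) w \<sigma> a b \<and>
            take q (sp_act n \<sigma> (rho_g n)) = map of_int xs \<and>
            drop (n - p) (sp_act n \<sigma> (rho_g n)) = map of_int (map uminus (rev ys))}"
    then obtain w' \<sigma>' a' b' where t: "t = (perm_act w' (tau_of n k I J), \<sigma>', a', b')"
      and s': "solE n p q \<epsilon> \<eta> (tau_of n k I J) w' \<sigma>' a' b'"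
      "take q (sp_act n \<sigma>' (rho_g n)) = map of_int xs"
      "drop (n - p) (sp_act n \<sigma>' (rho_g n)) = map of_int (map uminus (rev ys))"
      by blast
    note d2 = M.sol_det[OF s']
    have sp2: "signed_perm n \<sigma>'" using s'(1) by (simp add: solE_def W1_def)
    have "\<sigma>' = \<sigma>" using srI_inj[OF sp2 sp1] d1 d2 by simp
    then show "t = (perm_act w (tau_of n k I J), \<sigma>, M.A0, M.B0)" using t d1 d2 by simp
  qed
qed

end
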